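(* Let $V$ be a finite-dimensional real Hilbert space with inner product $\langle\cdot,\cdot\rangle$, let $M\subset V$ be a convex open subset, and let $f\in C^1(M,V)$ satisfy (i) there exists $A_0\in M$ such that the Fréchet derivative $Df[A_0]$ is positive definite; (ii) for every $A\in M$, $Df[A]$ is invertible and self-adjoint. Then $\langle Df[A].H,\,H\rangle>0$ for all $A\in M$ and all $H\in V\setminus\{0\}$, and consequently $f$ is strictly monotone on $M$, i.e. $\langle f(A)-f(B),\,A-B\rangle>0$ for all $A\neq B$ in $M$.
   Context: $Df[A]\in L(V,V)$ denotes the Fréchet derivative of $f$ at $A$; it is positive definite if $\langle Df[A].H,H\rangle>0$ for all $H\neq 0$. *)

theory Defs
  imports "HOL-Analysis.Analysis"
begin

end

theory Submission imports Defs begin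

lemma psd_inj_pd:
  fixes T :: "'a::real_inner \<Rightarrow> 'a"
  assumes lin: "linear T" and sa: "\<And>x y. inner (T x) y = inner x (T y)"
    and psd: "\<And>H. inner (T H) H \<ge> 0" and inj: "inj T" and x: "x \<noteq> 0"
  shows "inner (T x) x > 0"
proof (rule ccontr)
  assume nt: "\<not> inner (T x) x > 0"
  have z: "inner (T x) x = 0" using psd[of x] nt by linarith
  define y where "y = T x"
  define a where "a = inner (T x) y"
  define b where "b = inner (T y) y"
  have b0: "b \<ge> 0" using psd b_def by auto
  have gen: "0 \<le> 2*t*a + t^2*b" for t
  proof -
    have "0 \<le> inner (T (x + t *\<^sub>R y)) (x + t *\<^sub>R y)" by (rule psd)
    also have "\<dots> = inner (T x) x + t * inner (T x) y + t * inner (T y) x + t^2 * inner (T y) y"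
      by (simp add: linear_add[OF lin] linear_scale[OF lin] inner_add_left inner_add_right power2_eq_square algebra_simps)
    also have "inner (T y) x = inner (T x) y" using sa by (metis inner_commute)
    finally show ?thesis using z a_def b_def by (simp add: algebra_simps)
  qed
  have "a = 0"
  proof (rule ccontr)
    assume a: "a \<noteq> 0"
    have "0 \<le> 2*(-a/(b+1))*a + (-a/(b+1))^2*b" by (rule gen)
    moreover have "2*(-a/(b+1))*a + (-a/(b+1))^2*b = a^2*(-b-2)/(b+1)^2"
    proof -
      have "b + 1 \<noteq> 0" using b0 by simp
      thus ?thesis by (simp add: power2_eq_square divide_simps) algebra
    qed
    moreover have "a^2*(-b-2)/(b+1)^2 < 0" using a b0
      by (simp add: divide_neg_pos mult_pos_neg)
    ultimately show False by linarith
  qed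
  hence "T x = 0" using a_def y_def by simp
  moreover have "T 0 = 0" using lin by (simp add: linear_0)
  ultimately show False using inj x by (metis injD)
qed

lemma pd_uniform:
  fixes T :: "'a::euclidean_space \<Rightarrow> 'a"
  assumes lin: "bounded_linear T" and pd: "\<And>H. H \<noteq> 0 \<Longrightarrow> inner (T H) H > 0"
  shows "\<exists>c>0. \<forall>H. inner (T H) H \<ge> c * (norm H)^2"
proof -
  have ne: "sphere (0::'a) 1 \<noteq> {}" by simp
  have co: "continuous_on (sphere 0 1) (\<lambda>H. inner (T H) H)"
    using continuous_on_inner[OF linear_continuous_on[OF lin] continuous_on_id] .
  obtain H0 where H0: "H0 \<in> sphere 0 1" and m: "\<forall>y\<in>sphere 0 1. inner (T H0) H0 \<le> inner (T y) y"
    using continuous_attains_inf[OF compact_sphere ne co] by blast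
  have c: "inner (T H0) H0 > 0" using H0 pd[of H0] by (metis mem_sphere_0 norm_zero zero_neq_one)
  have "inner (T H0) H0 * (norm H)^2 \<le> inner (T H) H" for H
  proof (cases "H = 0")
    case True then show ?thesis using lin by (simp add: linear_simps)
  next
    case False
    define u where "u = H /\<^sub>R norm H"
    have "u \<in> sphere 0 1" using False u_def by simp
    hence "inner (T H0) H0 \<le> inner (T u) u" using m by auto
    also have "inner (T u) u = inner (T H) H / (norm H)^2"
      using False by (simp add: u_def linear_simps[OF lin] power2_eq_square field_simps)
    finally show ?thesis using False by (simp add: field_simps)
  qed
  thus ?thesis using c by blast
qed

lemma blinfun_quad_bound:
  fixes T :: "'a::real_inner \<Rightarrow>\<^sub>L 'a"
  shows "\<bar>inner (T H) H\<bar> \<le> norm T * (norm H)^2"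
proof -
  have "\<bar>inner (T H) H\<bar> \<le> norm (T H) * norm H" by (rule Cauchy_Schwarz_ineq2)
  also have "\<dots> \<le> norm T * norm H * norm H" by (simp add: mult_right_mono norm_blinfun)
  finally show ?thesis by (simp add: power2_eq_square mult.assoc)
qed


theorem lemma1p1:
  fixes f :: "'a::euclidean_space \<Rightarrow> 'a"
    and Df :: "'a \<Rightarrow> ('a \<Rightarrow>\<^sub>L 'a)"
    and M :: "'a set"
  assumes "convex M" and "open M"
    and deriv: "\<And>A. A \<in> M \<Longrightarrow> (f has_derivative blinfun_apply (Df A)) (at A)"
    and cont: "continuous_on M Df"
    and pd0: "\<exists>A0\<in>M. \<forall>H. H \<noteq> 0 \<longrightarrow> inner (Df A0 H) H > 0"
    and inv: "\<And>A. A \<in> M \<Longrightarrow> bij (blinfun_apply (Df A))"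
    and sa: "\<And>A x y. A \<in> M \<Longrightarrow> inner (Df A x) y = inner x (Df A y)"
  shows "(\<forall>A\<in>M. \<forall>H. H \<noteq> 0 \<longrightarrow> inner (Df A H) H > 0)
    \<and> (\<forall>A\<in>M. \<forall>B\<in>M. A \<noteq> B \<longrightarrow> inner (f A - f B) (A - B) > 0)"
proof -
  define P where "P = {A\<in>M. \<forall>H. H \<noteq> 0 \<longrightarrow> inner (Df A H) H > 0}"
  define N where "N = (\<Union>H. M \<inter> (\<lambda>B. inner (Df B H) H) -` {..<0})"
  have openN: "open N" unfolding N_def
  proof (intro open_Union ballI, clarify)
    fix H
    have c1: "continuous_on M (\<lambda>B. Df B H)"
      using bounded_bilinear.continuous_on[OF bounded_bilinear_blinfun_apply cont continuous_on_const] .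
    have "continuous_on M (\<lambda>B. inner (Df B H) H)"
      using continuous_on_inner[OF c1 continuous_on_const] .
    then show "open (M \<inter> (\<lambda>B. inner (Df B H) H) -` {..<0})"
      by (rule continuous_open_preimage[OF _ \<open>open M\<close> open_lessThan])
  qed
  have openP: "open P"
  proof (subst open_subopen, intro ballI)
    fix A assume A: "A \<in> P"
    then obtain c where c: "c > 0" "\<forall>H. inner (Df A H) H \<ge> c * (norm H)^2"
      using pd_uniform[of "blinfun_apply (Df A)"] unfolding P_def
      by (auto simp: blinfun.bounded_linear_right)
    define U where "U = M \<inter> Df -` ball (Df A) c"
    have "open U" unfolding U_def using continuous_open_preimage[OF cont \<open>open M\<close>] by blast
    moreover have "A \<in> U" using A c unfolding U_def P_def by auto
    moreover have "U \<subseteq> P"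
    proof
      fix B assume B: "B \<in> U"
      have "\<forall>H. H \<noteq> 0 \<longrightarrow> inner (Df B H) H > 0"
      proof (intro allI impI)
        fix H :: 'a assume H: "H \<noteq> 0"
        have nd: "norm (Df B - Df A) < c" using B unfolding U_def by (simp add: dist_norm norm_minus_commute)
        have "\<bar>inner ((Df B - Df A) H) H\<bar> \<le> norm (Df B - Df A) * (norm H)^2"
          by (rule blinfun_quad_bound)
        also have "\<dots> < c * (norm H)^2" using nd H by simp
        finally have "\<bar>inner ((Df B - Df A) H) H\<bar> < c * (norm H)^2" .
        moreover have "inner ((Df B - Df A) H) H = inner (Df B H) H - inner (Df A H) H"
          by (simp add: minus_blinfun.rep_eq inner_diff_left)
        ultimately show "inner (Df B H) H > 0" using c(2)[rule_format, of H] by linarith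
      qed
      thus "B \<in> P" using B unfolding U_def P_def by auto
    qed
    ultimately show "\<exists>T. open T \<and> A \<in> T \<and> T \<subseteq> P" by blast
  qed
  have cover: "M \<subseteq> P \<union> N"
  proof
    fix A assume A: "A \<in> M"
    show "A \<in> P \<union> N"
    proof (cases "\<exists>H. inner (Df A H) H < 0")
      case True then show ?thesis using A unfolding N_def by auto
    next
      case False
      have psd: "\<And>H. 0 \<le> inner (Df A H) H" using False by (simp add: not_less)
      have lin: "linear (blinfun_apply (Df A))" by (rule bounded_linear.linear[OF blinfun.bounded_linear_right])
      have ij: "inj (blinfun_apply (Df A))" using inv[OF A] by (rule bij_is_inj)
      have "\<forall>H. H \<noteq> 0 \<longrightarrow> inner (Df A H) H > 0"
        using psd_inj_pd[OF lin sa[OF A] psd ij] by blast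
      then show ?thesis using A unfolding P_def by auto
    qed
  qed
  have disj: "P \<inter> N \<inter> M = {}"
  proof (rule ccontr)
    assume "P \<inter> N \<inter> M \<noteq> {}"
    then obtain A H where A: "A \<in> P" "inner (Df A H) H < 0" unfolding N_def by auto
    have "H \<noteq> 0" using A(2) by (auto simp: blinfun.zero_right)
    thus False using A unfolding P_def by force
  qed
  have Pne: "P \<inter> M \<noteq> {}" using pd0 unfolding P_def by auto
  have part1: "\<forall>A\<in>M. \<forall>H. H \<noteq> 0 \<longrightarrow> inner (Df A H) H > 0"
  proof (rule ccontr)
    assume "\<not> ?thesis"
    then obtain A where "A \<in> M" "A \<notin> P" unfolding P_def by auto
    hence NM: "N \<inter> M \<noteq> {}" using cover by auto
    have cM: "connected M" using \<open>convex M\<close> by (rule convex_connected)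
    have "\<exists>A B. open A \<and> open B \<and> M \<subseteq> A \<union> B \<and> A \<inter> B \<inter> M = {} \<and> A \<inter> M \<noteq> {} \<and> B \<inter> M \<noteq> {}"
      using openP openN cover disj Pne NM by blast
    thus False using cM unfolding connected_def by blast
  qed
  have part2: "inner (f A - f B) (A - B) > 0" if A: "A \<in> M" and B: "B \<in> M" and AB: "A \<noteq> B" for A B
  proof -
    define p where "p = (\<lambda>t::real. B + t *\<^sub>R (A - B))"
    have pM: "p t \<in> M" if "0 \<le> t" "t \<le> 1" for t
    proof -
      have "t *\<^sub>R A + (1 - t) *\<^sub>R B \<in> M"
        using convexD[OF \<open>convex M\<close> A B] that by auto
      moreover have "t *\<^sub>R A + (1 - t) *\<^sub>R B = p t" by (simp add: p_def algebra_simps)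
      ultimately show ?thesis by simp
    qed
    define \<phi> where "\<phi> = (\<lambda>t. inner (f (p t)) (A - B))"
    have D: "DERIV \<phi> t :> inner (Df (p t) (A - B)) (A - B)" if "0 \<le> t" "t \<le> 1" for t
    proof -
      have dp: "(p has_derivative (\<lambda>s. s *\<^sub>R (A - B))) (at t)"
        unfolding p_def by (auto intro!: derivative_eq_intros)
      have df: "(f has_derivative blinfun_apply (Df (p t))) (at (p t))" using deriv pM that by blast
      have "((\<lambda>t. f (p t)) has_derivative (\<lambda>s. Df (p t) (s *\<^sub>R (A - B)))) (at t)"
        using has_derivative_compose[OF dp df] by (simp add: o_def)
      hence hd: "(\<phi> has_derivative (\<lambda>s. inner (Df (p t) (s *\<^sub>R (A - B))) (A - B))) (at t)"
        unfolding \<phi>_def by (auto intro!: derivative_eq_intros)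
      show ?thesis
      proof -
        have "(\<lambda>s. inner (Df (p t) (s *\<^sub>R (A - B))) (A - B)) = (*) (inner (Df (p t) (A - B)) (A - B))"
          by (rule ext) (simp add: blinfun.scaleR_right)
        thus ?thesis using hd by (simp only: has_field_derivative_def)
      qed
    qed
    obtain z where z: "0 < z" "z < 1" "\<phi> 1 - \<phi> 0 = (1 - 0) * inner (Df (p z) (A - B)) (A - B)"
      using MVT2[of 0 1 \<phi> "\<lambda>t. inner (Df (p t) (A - B)) (A - B)"] D by auto
    have "inner (Df (p z) (A - B)) (A - B) > 0" using part1 pM z AB by auto
    moreover have "\<phi> 1 - \<phi> 0 = inner (f A - f B) (A - B)"
      by (simp add: \<phi>_def p_def inner_diff_left)
    ultimately show ?thesis using z by simp
  qed
  show ?thesis using part1 part2 by blast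
qed

end
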